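(* If $1 \leq i \neq j \leq r$, then for any $l \geq 1$ the graph $\mathcal{H}(V_i,V_j)$ contains no copy of $K_{2,2l^2 - l + 1}$.
   Context: Let $r \geq 2$ and $l \geq 1$ be integers and $q$ a power of an odd prime. Let $\alpha_1, \dots, \alpha_r$ be distinct elements of $\mathbb{F}_q$, and let $m_1, \dots, m_l$ be distinct elements of $\mathbb{F}_q^* = \mathbb{F}_q\setminus\{0\}$ such that $m_s(\alpha_k - \alpha_i) \neq m_t(\alpha_k - \alpha_j)$ whenever $1 \leq s,t \leq l$ and $i,j,k$ are distinct integers in $\{1,\dots,r\}$. For $1 \leq i \leq r$ let $V_i = \mathbb{F}_q \times \mathbb{F}_q \times \{i\}$. For $x,y \in \mathbb{F}_q$, $a \in \mathbb{F}_q^*$, $s \in \{1,\dots,l\}$ let \[ e(x,y,a,m_s) = \{(x + \alpha_i m_s a,\; y + \alpha_i m_s a^2,\; i) : 1 \leq i \leq r\}. \] $\mathcal{H}$ is the $r$-uniform hypergraph with vertex set $V_1 \cup \dots \cup V_r$ and edge set $\{e(x,y,a,m_s) : x,y \in \mathbb{F}_q,\ a \in \mathbb{F}_q^*,\ 1 \leq s \leq l\}$. For $i \neq j$, $\mathcal{H}(V_i,V_j)$ is the bipartite graph with parts $V_i$ and $V_j$ in which $u \in V_i$ and $w \in V_j$ are adjacent iff $\{u,w\} \subseteq e$ for some edge $e$ of $\mathcal{H}$. *)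

theory Defs
  imports Main
begin

definition Vpart :: "nat \<Rightarrow> ('a \<times> 'a \<times> nat) set" where
  "Vpart i = UNIV \<times> UNIV \<times> {i}"

definition hedge :: "(nat \<Rightarrow> 'a::field) \<Rightarrow> nat \<Rightarrow> 'a \<Rightarrow> 'a \<Rightarrow> 'a \<Rightarrow> 'a \<Rightarrow> ('a \<times> 'a \<times> nat) set" where
  "hedge \<alpha> r x y a ms = {(x + \<alpha> i * ms * a, y + \<alpha> i * ms * a^2, i) | i. 1 \<le> i \<and> i \<le> r}"

definition hedges :: "(nat \<Rightarrow> 'a::field) \<Rightarrow> (nat \<Rightarrow> 'a) \<Rightarrow> nat \<Rightarrow> nat \<Rightarrow> ('a \<times> 'a \<times> nat) set set" where
  "hedges \<alpha> m r l = {hedge \<alpha> r x y a (m s) | x y a s. a \<noteq> 0 \<and> 1 \<le> s \<and> s \<le> l}"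

definition bip_adj :: "(nat \<Rightarrow> 'a::field) \<Rightarrow> (nat \<Rightarrow> 'a) \<Rightarrow> nat \<Rightarrow> nat \<Rightarrow> nat \<Rightarrow> nat
    \<Rightarrow> ('a \<times> 'a \<times> nat) \<Rightarrow> ('a \<times> 'a \<times> nat) \<Rightarrow> bool" where
  "bip_adj \<alpha> m r l i j u w \<longleftrightarrow>
     ((u \<in> Vpart i \<and> w \<in> Vpart j) \<or> (u \<in> Vpart j \<and> w \<in> Vpart i)) \<and>
     (\<exists>e \<in> hedges \<alpha> m r l. {u, w} \<subseteq> e)"

definition contains_Kst :: "('v \<Rightarrow> 'v \<Rightarrow> bool) \<Rightarrow> 'v set \<Rightarrow> nat \<Rightarrow> nat \<Rightarrow> bool" where
  "contains_Kst adj V s t \<longleftrightarrow>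
     (\<exists>A B. A \<subseteq> V \<and> B \<subseteq> V \<and> A \<inter> B = {} \<and> finite A \<and> finite B \<and>
            card A = s \<and> card B = t \<and> (\<forall>a\<in>A. \<forall>b\<in>B. adj a b))"

end

theory Submission
  imports Defs
begin

lemma two_nz:
  assumes "odd (card (UNIV :: 'a::{field,finite} set))"
  shows "(2::'a) \<noteq> 0"
proof
  assume h: "(2::'a) = 0"
  have inj: "inj (\<lambda>x::'a. x + 1)" by (auto simp: inj_def)
  have surj: "range (\<lambda>x::'a. x + 1) = UNIV"
    by (auto simp: image_def intro!: exI[where x="_ - 1"])
  have "sum id (UNIV::'a set) = sum id (range (\<lambda>x::'a. x + 1))" using surj by simp
  also have "\<dots> = sum (\<lambda>x. x + 1) (UNIV::'a set)" using sum.reindex[OF inj, of id] by simp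
  also have "\<dots> = sum id UNIV + of_nat (card (UNIV::'a set))" by (simp add: sum.distrib)
  finally have c0: "of_nat (card (UNIV::'a set)) = (0::'a)" by simp
  obtain k where k: "card (UNIV::'a set) = Suc (2*k)" using assms oddE by (metis Suc_eq_plus1)
  have "(of_nat (Suc (2*k)) :: 'a) = 1 + 2 * of_nat k" by simp
  also have "\<dots> = 1" using h by simp
  finally have "(of_nat (card (UNIV::'a set)) :: 'a) = 1" using k by simp
  then show False using c0 by simp
qed

lemma adj_eq:
  assumes "{u,w} \<subseteq> hedge \<alpha> r x y a ms" "u \<in> Vpart p" "w \<in> Vpart q"
  shows "(fst w - fst u)^2 = (\<alpha> q - \<alpha> p) * ms * (fst (snd w) - fst (snd u))"
proof -
  from assms have "u \<in> hedge \<alpha> r x y a ms" "w \<in> hedge \<alpha> r x y a ms" by auto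
  then obtain k k' where u: "u = (x + \<alpha> k * ms * a, y + \<alpha> k * ms * a^2, k)"
     and w: "w = (x + \<alpha> k' * ms * a, y + \<alpha> k' * ms * a^2, k')"
    unfolding hedge_def by blast
  have "k = p" "k' = q" using assms(2,3) u w by (auto simp: Vpart_def)
  then show ?thesis using u w by (simp add: power2_eq_square algebra_simps)
qed

lemma card_le2:
  assumes "finite S" "\<And>x y z. x \<in> S \<Longrightarrow> y \<in> S \<Longrightarrow> z \<in> S \<Longrightarrow> x = y \<or> x = z \<or> y = z"
  shows "card S \<le> 2"
proof (cases "S = {}")
  case True then show ?thesis by simp
next
  case False
  then obtain x where x: "x \<in> S" by blast
  have "card (S - {x}) \<le> Suc 0"
    using assms x by (subst card_le_Suc0_iff_eq) blast+
  moreover have "card S = Suc (card (S - {x}))" using x assms(1)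
    by (metis card_Suc_Diff1)
  ultimately show ?thesis by simp
qed

lemma inner_sum:
  assumes "s \<in> {1..l::nat}"
  shows "(\<Sum>t\<in>{1..l}. (if s = t then 1 else 2::nat)) = 2*l - 1"
proof -
  have "(\<Sum>t\<in>{1..l}. (if s = t then 1 else 2::nat)) = 1 + (\<Sum>t\<in>{1..l}-{s}. (if s = t then 1 else 2::nat))"
    using assms by (subst sum.remove[of _ s]) auto
  also have "(\<Sum>t\<in>{1..l}-{s}. (if s = t then 1 else 2::nat)) = (\<Sum>t\<in>{1..l}-{s}. 2)"
    by (rule sum.cong) auto
  also have "\<dots> = 2 * (l - 1)" using assms by simp
  finally have "(\<Sum>t\<in>{1..l}. (if s = t then 1 else 2::nat)) = 1 + 2 * (l - 1)" .
  moreover have "1 + 2 * (l - 1) = 2*l - 1" using assms by auto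
  ultimately show ?thesis by simp
qed

lemma count:
  fixes \<alpha> m :: "nat \<Rightarrow> 'a::{field,finite}"
  assumes two: "(2::'a) \<noteq> 0"
    and apq: "\<alpha> p \<noteq> \<alpha> q"
    and m_inj: "inj_on m {1..l}"
    and m_nz: "\<forall>s\<in>{1..l}. m s \<noteq> 0"
    and u: "u \<in> Vpart p" and u': "u' \<in> Vpart p" and uu: "u \<noteq> u'"
    and B: "finite B" "B \<subseteq> Vpart q"
    and adj: "\<forall>w\<in>B. (\<exists>e\<in>hedges \<alpha> m r l. {u,w} \<subseteq> e) \<and> (\<exists>e\<in>hedges \<alpha> m r l. {u',w} \<subseteq> e)"
  shows "card B \<le> 2*l^2 - l"
proof -
  define c where "c s = (\<alpha> q - \<alpha> p) * m s" for s
  define u1 where "u1 = fst u"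
  define u2 where "u2 = fst (snd u)"
  define v1 where "v1 = fst u'"
  define v2 where "v2 = fst (snd u')"
  have cnz: "c s \<noteq> 0" if "s \<in> {1..l}" for s using m_nz that apq by (simp add: c_def)
  have cinj: "c s \<noteq> c t" if "s \<in> {1..l}" "t \<in> {1..l}" "s \<noteq> t" for s t
  proof -
    have "m s \<noteq> m t" using m_inj that by (meson inj_onD)
    then show ?thesis using apq by (simp add: c_def)
  qed
  have eqs: "\<exists>s\<in>{1..l}. (fst w - fst z)^2 = c s * (fst (snd w) - fst (snd z))"
    if "w \<in> B" "z \<in> Vpart p" "\<exists>e\<in>hedges \<alpha> m r l. {z,w} \<subseteq> e" for w z
  proof -
    from that(3) obtain x y a s where hs: "1 \<le> s" "s \<le> l" "{z,w} \<subseteq> hedge \<alpha> r x y a (m s)"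
      unfolding hedges_def by blast
    have wq: "w \<in> Vpart q" using that(1) B(2) by blast
    have "(fst w - fst z)^2 = c s * (fst (snd w) - fst (snd z))"
      using adj_eq[OF hs(3) that(2) wq] by (simp add: c_def)
    then show ?thesis using hs(1,2) by auto
  qed
  define N where "N s t = {w\<in>B. (fst w - u1)^2 = c s * (fst (snd w) - u2) \<and>
                                (fst w - v1)^2 = c t * (fst (snd w) - v2)}" for s t
  have cover: "B \<subseteq> (\<Union>s\<in>{1..l}. \<Union>t\<in>{1..l}. N s t)"
  proof
    fix w assume w: "w \<in> B"
    obtain s where s: "s \<in> {1..l}" "(fst w - u1)^2 = c s * (fst (snd w) - u2)"
      using eqs[OF w u] adj w by (auto simp: u1_def u2_def)
    obtain t where t: "t \<in> {1..l}" "(fst w - v1)^2 = c t * (fst (snd w) - v2)"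
      using eqs[OF w u'] adj w by (auto simp: v1_def v2_def)
    show "w \<in> (\<Union>s\<in>{1..l}. \<Union>t\<in>{1..l}. N s t)" using s t w by (auto simp: N_def)
  qed
  define f where "f s t X = c t * (X - u1)^2 - c s * (X - v1)^2" for s t X
  have fval: "f s t (fst w) = c s * c t * (v2 - u2)" if "w \<in> N s t" for s t w
  proof -
    from that have h1: "(fst w - u1)^2 = c s * (fst (snd w) - u2)" and h2: "(fst w - v1)^2 = c t * (fst (snd w) - v2)"
      by (auto simp: N_def)
    show ?thesis unfolding f_def h1 h2 by (simp add: algebra_simps)
  qed
  have fdiff: "f s t X - f s t Y = (X - Y) * ((c t - c s) * (X + Y) - 2 * c t * u1 + 2 * c s * v1)"
    for s t X Y by (simp add: f_def power2_eq_square algebra_simps)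
  have det: "w = w'" if "s \<in> {1..l}" "w \<in> N s t" "w' \<in> N s t" "fst w = fst w'" for s t w w'
  proof -
    from that have h1: "(fst w - u1)^2 = c s * (fst (snd w) - u2)" and h2: "(fst w' - u1)^2 = c s * (fst (snd w') - u2)"
      by (auto simp: N_def)
    have "c s * (fst (snd w) - u2) = c s * (fst (snd w') - u2)" using h1 h2 that(4) by metis
    hence "fst (snd w) - u2 = fst (snd w') - u2" using cnz[OF that(1)] by simp
    with cnz[OF that(1)] have "fst (snd w) = fst (snd w')" by simp
    moreover have "w \<in> Vpart q" "w' \<in> Vpart q" using that B by (auto simp: N_def)
    ultimately show ?thesis using that(4) by (cases w; cases w') (auto simp: Vpart_def)
  qed
  have root: "(c t - c s) * (fst w + fst w') - 2 * c t * u1 + 2 * c s * v1 = 0"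
    if "w \<in> N s t" "w' \<in> N s t" "fst w \<noteq> fst w'" for s t w w'
  proof -
    have "f s t (fst w) - f s t (fst w') = 0" using fval that by simp
    then show ?thesis using fdiff[of s t "fst w" "fst w'"] that(3) by simp
  qed
  have bound: "card (N s t) \<le> (if s = t then 1 else 2)" if st: "s \<in> {1..l}" "t \<in> {1..l}" for s t
  proof -
    have fin: "finite (N s t)" using B by (simp add: N_def)
    show ?thesis
    proof (cases "s = t")
      case True
      have "w = w'" if "w \<in> N s t" "w' \<in> N s t" for w w'
      proof (cases "u1 = v1")
        case True
        have "f s t (fst w) = 0" using \<open>s = t\<close> True by (simp add: f_def)
        then have "c s * c t * (v2 - u2) = 0" using fval that by simp
        then have "u2 = v2" using cnz st by simp
        then have "u = u'" using True u u' by (cases u; cases u') (auto simp: Vpart_def u1_def v1_def u2_def v2_def)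
        then show ?thesis using uu by simp
      next
        case False
        show ?thesis
        proof (rule ccontr)
          assume "w \<noteq> w'"
          then have ne: "fst w \<noteq> fst w'" using det st that by blast
          have "2 * c s * (v1 - u1) = 0" using root[OF that ne] \<open>s = t\<close> by (simp add: algebra_simps)
          then show False using two cnz[OF st(1)] False by simp
        qed
      qed
      then show ?thesis using fin True by (simp add: card_le_Suc0_iff_eq)
    next
      case False
      have "x = y \<or> x = z \<or> y = z" if "x \<in> N s t" "y \<in> N s t" "z \<in> N s t" for x y z
      proof (rule ccontr)
        assume "\<not> ?thesis"
        then have n: "fst x \<noteq> fst y" "fst x \<noteq> fst z" "fst y \<noteq> fst z"
          using det st that by blast+
        have "(c t - c s) * (fst y - fst z) = ((c t - c s) * (fst x + fst y) - 2 * c t * u1 + 2 * c s * v1)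
              - ((c t - c s) * (fst x + fst z) - 2 * c t * u1 + 2 * c s * v1)"
          by (simp add: algebra_simps)
        also have "\<dots> = 0" using root[OF that(1,2) n(1)] root[OF that(1,3) n(2)] by simp
        finally have "(c t - c s) * (fst y - fst z) = 0" .
        then show False using cinj[OF st False] n(3) by simp
      qed
      then have "card (N s t) \<le> 2" using card_le2[OF fin] by blast
      then show ?thesis using False by simp
    qed
  qed
  have "card B \<le> card (\<Union>s\<in>{1..l}. \<Union>t\<in>{1..l}. N s t)"
    using cover by (intro card_mono) (auto simp: N_def B)
  also have "\<dots> \<le> (\<Sum>s\<in>{1..l}. card (\<Union>t\<in>{1..l}. N s t))" by (rule card_UN_le) simp
  also have "\<dots> \<le> (\<Sum>s\<in>{1..l}. \<Sum>t\<in>{1..l}. card (N s t))"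
    by (intro sum_mono card_UN_le) simp
  also have "\<dots> \<le> (\<Sum>s\<in>{1..l}. \<Sum>t\<in>{1..l}. (if s = t then 1 else 2::nat))"
    by (intro sum_mono bound) auto
  also have "\<dots> = (\<Sum>s\<in>{1..l}. 2*l - 1)" by (rule sum.cong[OF refl], rule inner_sum, assumption)
  also have "\<dots> = l * (2*l - 1)" by simp
  also have "\<dots> = 2*l^2 - l" by (simp add: power2_eq_square diff_mult_distrib2 algebra_simps)
  finally show ?thesis .
qed

theorem lemma3p8:
  fixes \<alpha> m :: "nat \<Rightarrow> 'a::{field,finite}" and r l i j :: nat
  assumes odd_q: "odd (card (UNIV :: 'a set))"
    and r: "r \<ge> 2" and l: "l \<ge> 1"
    and alpha_inj: "inj_on \<alpha> {1..r}"
    and m_inj: "inj_on m {1..l}"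
    and m_nz: "\<forall>s\<in>{1..l}. m s \<noteq> 0"
    and cond: "\<forall>s\<in>{1..l}. \<forall>t\<in>{1..l}. \<forall>i'\<in>{1..r}. \<forall>j'\<in>{1..r}. \<forall>k\<in>{1..r}.
                 i' \<noteq> j' \<and> i' \<noteq> k \<and> j' \<noteq> k \<longrightarrow>
                 m s * (\<alpha> k - \<alpha> i') \<noteq> m t * (\<alpha> k - \<alpha> j')"
    and ij: "1 \<le> i" "i \<le> r" "1 \<le> j" "j \<le> r" "i \<noteq> j"
  shows "\<not> contains_Kst (bip_adj \<alpha> m r l i j) (Vpart i \<union> Vpart j) 2 (2 * l^2 - l + 1)"
proof
  assume "contains_Kst (bip_adj \<alpha> m r l i j) (Vpart i \<union> Vpart j) 2 (2 * l^2 - l + 1)"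
  then obtain A B where AB: "A \<subseteq> Vpart i \<union> Vpart j" "B \<subseteq> Vpart i \<union> Vpart j" "finite B"
    "card A = 2" "card B = 2 * l^2 - l + 1" "\<forall>a\<in>A. \<forall>b\<in>B. bip_adj \<alpha> m r l i j a b"
    unfolding contains_Kst_def by blast
  obtain u u' where uu: "A = {u,u'}" "u \<noteq> u'" using AB(4) card_2_iff by metis
  have "B \<noteq> {}" using AB(5) by (metis card.empty add_is_0 one_neq_zero)
  then obtain b0 where b0: "b0 \<in> B" by blast
  have two: "(2::'a) \<noteq> 0" using two_nz odd_q by blast
  have aij: "\<alpha> i \<noteq> \<alpha> j" using inj_onD[OF alpha_inj, of i j] ij by auto
  have disj: "x \<in> Vpart i \<Longrightarrow> x \<notin> Vpart j" for x using ij by (auto simp: Vpart_def)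
  have main: "False" if pq: "(p = i \<and> q = j) \<or> (p = j \<and> q = i)" "u \<in> Vpart p" "p \<noteq> q" for p q
  proof -
    have disj': "x \<in> Vpart p \<Longrightarrow> x \<notin> Vpart q" for x using pq(3) by (auto simp add: Vpart_def)
    have adjc: "\<forall>a\<in>A. \<forall>b\<in>B. ((a \<in> Vpart p \<and> b \<in> Vpart q) \<or> (a \<in> Vpart q \<and> b \<in> Vpart p)) \<and>
                 (\<exists>e \<in> hedges \<alpha> m r l. {a, b} \<subseteq> e)"
      using AB(6) pq(1) unfolding bip_adj_def by blast
    have Bq: "B \<subseteq> Vpart q" using adjc uu pq(2) disj' by blast
    have u': "u' \<in> Vpart p" using adjc uu b0 Bq disj' by blast
    have apq: "\<alpha> p \<noteq> \<alpha> q" using aij pq(1) by auto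
    have adj: "\<forall>w\<in>B. (\<exists>e\<in>hedges \<alpha> m r l. {u,w} \<subseteq> e) \<and> (\<exists>e\<in>hedges \<alpha> m r l. {u',w} \<subseteq> e)"
      using adjc uu by auto
    have "card B \<le> 2*l^2 - l"
      using count[OF two apq m_inj m_nz pq(2) u' uu(2) AB(3) Bq adj] .
    then show False using AB(5) by simp
  qed
  have "u \<in> Vpart i \<union> Vpart j" using AB(1) uu by auto
  then show False
  proof
    assume "u \<in> Vpart i" then show False using main[of i j] ij by auto
  next
    assume "u \<in> Vpart j" then show False using main[of j i] ij by auto
  qed
qed

end
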